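(* Let $\Gamma\in[0,1]^{|\mathcal X|\times N}$ be $(\kappa,\delta)$-admissible, let $\epsilon\ge0$, and let $D$ be the uniform distribution on $[0,1/\eta]$ with $\eta=\sqrt{\delta/((1+2\epsilon)T\kappa)}$. Then Generalized FTPL with parameters $(\Gamma,D,\epsilon)$ satisfies \[ \mathrm{Regret}\le O\big(N\sqrt{(1+2\epsilon)T\kappa/\delta}\big)+\epsilon T . \] Since always $\kappa\le 1/\delta$ (entries lie in $[0,1]$), this is at most $O\big((N/\delta)\sqrt{(1+2\epsilon)T}\big)+\epsilon T$.
   Context: Online learning setting: $\mathcal X$ finite set of learner actions, $\mathcal Y$ set of adversary actions, $f:\mathcal X\times\mathcal Y\to[0,1]$; adversary sequence $y_1,\dots,y_T$ fixed in advance; $\mathrm{Regret}=\mathbb{E}[\max_{x}\sum_t f(x,y_t)-\sum_t f(x_t,y_t)]$. Generalized FTPL with parameters $(\Gamma,D,\epsilon)$: draw $\alpha_1,\dots,\alpha_N$ i.i.d. from $D$ once; at each round $t$, play any $x_t$ with $\sum_{\tau<t}f(x_t,y_\tau)+\vec\alpha\cdot\Gamma_{x_t}\ge\sum_{\tau<t}f(x,y_\tau)+\vec\alpha\cdot\Gamma_x-\epsilon$ for all $x\in\mathcal X$, where $\Gamma_x$ is the row of $\Gamma$ indexed by $x$. $\Gamma$ is $(\kappa,\delta)$-admissible if its rows are pairwise distinct, each column has at most $\kappa$ distinct values, and distinct values within a column differ by at least $\delta$. *)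

theory Defs
  imports "HOL-Probability.Probability"
begin

text \<open>The matrix Gamma is represented as G, as a function from learner actions (rows) and column
  indices j < N to reals; row x is the vector (G x j) for j < N.\<close>

definition admissible ::
  "'x set \<Rightarrow> nat \<Rightarrow> ('x \<Rightarrow> nat \<Rightarrow> real) \<Rightarrow> nat \<Rightarrow> real \<Rightarrow> bool" where
  "admissible X N G \<kappa> \<delta> \<longleftrightarrow>
     (\<forall>x\<in>X. \<forall>x'\<in>X. x \<noteq> x' \<longrightarrow> (\<exists>j<N. G x j \<noteq> G x' j)) \<and>
     (\<forall>j<N. card ((\<lambda>x. G x j) ` X) \<le> \<kappa>) \<and>
     (\<forall>j<N. \<forall>x\<in>X. \<forall>x'\<in>X. G x j \<noteq> G x' j \<longrightarrow> \<bar>G x j - G x' j\<bar> \<ge> \<delta>)"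

definition ftpl_choice ::
  "'x set \<Rightarrow> ('x \<Rightarrow> 'y \<Rightarrow> real) \<Rightarrow> (nat \<Rightarrow> 'y) \<Rightarrow> ('x \<Rightarrow> nat \<Rightarrow> real) \<Rightarrow> nat \<Rightarrow> real
     \<Rightarrow> (nat \<Rightarrow> real) \<Rightarrow> nat \<Rightarrow> 'x \<Rightarrow> bool" where
  "ftpl_choice X f y G N \<epsilon> \<alpha> t x \<longleftrightarrow> x \<in> X \<and>
     (\<forall>x'\<in>X. (\<Sum>\<tau><t. f x (y \<tau>)) + (\<Sum>j<N. \<alpha> j * G x j)
              \<ge> (\<Sum>\<tau><t. f x' (y \<tau>)) + (\<Sum>j<N. \<alpha> j * G x' j) - \<epsilon>)"

definition ftpl_noise :: "nat \<Rightarrow> real \<Rightarrow> (nat \<Rightarrow> real) measure" where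
  "ftpl_noise N \<eta> = PiM {..<N} (\<lambda>_. uniform_measure lborel {0..1/\<eta>})"

definition regret ::
  "'x set \<Rightarrow> ('x \<Rightarrow> 'y \<Rightarrow> real) \<Rightarrow> (nat \<Rightarrow> 'y) \<Rightarrow> nat \<Rightarrow> (nat \<Rightarrow> real) measure
     \<Rightarrow> ((nat \<Rightarrow> real) \<Rightarrow> nat \<Rightarrow> 'x) \<Rightarrow> real" where
  "regret X f y T D sel =
     (\<integral>\<alpha>. (Max ((\<lambda>x. \<Sum>t<T. f x (y t)) ` X) - (\<Sum>t<T. f (sel \<alpha> t) (y t))) \<partial>D)"

end

theory Submission
  imports Defs
begin


lemma sum_upd:
  fixes \<alpha> \<beta> :: "nat \<Rightarrow> real"
  assumes "j < N" "\<forall>i. i \<noteq> j \<longrightarrow> \<beta> i = \<alpha> i"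
  shows "(\<Sum>i<N. \<beta> i * g i) = (\<Sum>i<N. \<alpha> i * g i) + (\<beta> j - \<alpha> j) * g j"
proof -
  have "(\<Sum>i<N. \<beta> i * g i) = (\<Sum>i<N. \<alpha> i * g i + (if i = j then (\<beta> j - \<alpha> j) * g j else 0))"
    using assms by (intro sum.cong) (auto simp: algebra_simps)
  also have "\<dots> = (\<Sum>i<N. \<alpha> i * g i) + (\<beta> j - \<alpha> j) * g j"
    using assms by (simp add: sum.distrib)
  finally show ?thesis .
qed

lemma mono_step:
  assumes adm: "admissible X N G \<kappa> \<delta>"
    and fb: "\<forall>x\<in>X. \<forall>b. f x b \<in> {0..1}"
    and c1: "ftpl_choice X f y G N \<epsilon> \<alpha> r x"
    and c2: "ftpl_choice X f y G N \<epsilon> \<beta> r' x'"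
    and j: "j < N" and bi: "\<forall>i. i \<noteq> j \<longrightarrow> \<beta> i = \<alpha> i"
    and rr: "r' = r \<or> r' = Suc r \<or> r = Suc r'"
    and dpos: "\<delta> > 0" and eps: "\<epsilon> \<ge> 0" and u: "(\<beta> j - \<alpha> j) * \<delta> > 1 + 2 * \<epsilon>"
  shows "G x j \<le> G x' j"
proof (rule ccontr)
  assume "\<not> G x j \<le> G x' j"
  have xX: "x \<in> X" and x'X: "x' \<in> X" using c1 c2 by (auto simp: ftpl_choice_def)
  have gap: "G x j - G x' j \<ge> \<delta>"
    using adm xX x'X j \<open>\<not> G x j \<le> G x' j\<close> unfolding admissible_def by force
  define R where "R = (\<lambda>r z. \<Sum>\<tau><r. f z (y \<tau>))"
  have hD: "\<bar>(R r x - R r x') - (R r' x - R r' x')\<bar> \<le> 1"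
  proof -
    have b1: "f x (y k) \<in> {0..1}" "f x' (y k) \<in> {0..1}" for k using fb xX x'X by auto
    from rr show ?thesis
    proof (elim disjE)
      assume "r' = r" thus ?thesis by simp
    next
      assume "r' = Suc r" thus ?thesis using b1[of r] by (auto simp: R_def abs_le_iff)
    next
      assume "r = Suc r'" thus ?thesis using b1[of r'] by (auto simp: R_def abs_le_iff)
    qed
  qed
  have l1: "R r x + (\<Sum>i<N. \<alpha> i * G x i) \<ge> R r x' + (\<Sum>i<N. \<alpha> i * G x' i) - \<epsilon>"
    using c1 x'X by (auto simp: ftpl_choice_def R_def)
  have l2: "R r' x' + (\<Sum>i<N. \<beta> i * G x' i) \<ge> R r' x + (\<Sum>i<N. \<beta> i * G x i) - \<epsilon>"
    using c2 xX by (auto simp: ftpl_choice_def R_def)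
  have s1: "(\<Sum>i<N. \<beta> i * G x i) = (\<Sum>i<N. \<alpha> i * G x i) + (\<beta> j - \<alpha> j) * G x j"
    using sum_upd[OF j bi] .
  have s2: "(\<Sum>i<N. \<beta> i * G x' i) = (\<Sum>i<N. \<alpha> i * G x' i) + (\<beta> j - \<alpha> j) * G x' j"
    using sum_upd[OF j bi] .
  have upos: "\<beta> j - \<alpha> j > 0"
  proof -
    have "(\<beta> j - \<alpha> j) * \<delta> > 0" using u eps by linarith
    thus ?thesis using dpos by (simp add: zero_less_mult_iff)
  qed
  have "(\<beta> j - \<alpha> j) * (G x j - G x' j) \<ge> (\<beta> j - \<alpha> j) * \<delta>"
    using upos gap by (intro mult_left_mono) auto
  then show False using l1 l2 s1 s2 hD u by (simp add: algebra_simps abs_if split: if_splits) linarith?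
qed




lemma cover_lemma:
  fixes a b :: "real \<Rightarrow> real" and L s :: real
  assumes fin: "finite V" and s: "s \<ge> 0"
    and inV: "\<forall>z\<in>{0..L}. a z \<in> V \<and> b z \<in> V"
    and mono: "\<forall>z\<in>{0..L}. \<forall>z'\<in>{0..L}. z' > z + s \<longrightarrow>
                 a z \<le> a z' \<and> a z \<le> b z' \<and> b z \<le> a z' \<and> b z \<le> b z'"
  shows "\<exists>U \<in> sets lborel. {z\<in>{0..L}. a z \<noteq> b z} \<subseteq> U \<and> emeasure lborel U \<le> ennreal (real (card V) * s)"
proof -
  define Sv where "Sv = (\<lambda>v. {z\<in>{0..L}. a z \<noteq> b z \<and> min (a z) (b z) = v})"
  define c where "c = (\<lambda>v. Inf (Sv v))"
  define U where "U = (\<Union>v\<in>V. {c v .. c v + s})"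
  have sub: "{z\<in>{0..L}. a z \<noteq> b z} \<subseteq> U"
  proof
    fix z assume z: "z \<in> {z\<in>{0..L}. a z \<noteq> b z}"
    define v where "v = min (a z) (b z)"
    have vV: "v \<in> V" using z inV unfolding v_def by (auto simp: min_def)
    have zS: "z \<in> Sv v" using z by (auto simp: Sv_def v_def)
    have bdd: "bdd_below (Sv v)" unfolding Sv_def by (rule bdd_belowI[of _ 0]) auto
    have "c v \<le> z" unfolding c_def using zS bdd by (rule cInf_lower)
    moreover have "z - s \<le> c v" unfolding c_def
    proof (rule cInf_greatest)
      show "Sv v \<noteq> {}" using zS by auto
    next
      fix z' assume z': "z' \<in> Sv v"
      show "z - s \<le> z'"
      proof (rule ccontr)
        assume "\<not> z - s \<le> z'"
        hence gt: "z > z' + s" by simp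
        have "a z' \<le> a z \<and> a z' \<le> b z \<and> b z' \<le> a z \<and> b z' \<le> b z"
          using mono z z' gt unfolding Sv_def by auto
        moreover have "a z' \<noteq> b z'" "min (a z') (b z') = v" using z' by (auto simp: Sv_def)
        ultimately show False unfolding v_def by (auto simp: min_def split: if_splits)
      qed
    qed
    ultimately show "z \<in> U" using vV unfolding U_def by auto
  qed
  have "emeasure lborel U \<le> (\<Sum>v\<in>V. emeasure lborel {c v .. c v + s})"
    unfolding U_def by (rule emeasure_subadditive_finite) (use fin in auto)
  also have "\<dots> = (\<Sum>v\<in>V. ennreal s)" using s by simp
  also have "\<dots> = ennreal (real (card V) * s)" using s by (simp add: ennreal_mult ennreal_of_nat_eq_real_of_nat)
  finally have m: "emeasure lborel U \<le> ennreal (real (card V) * s)" .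
  have "U \<in> sets lborel" unfolding U_def using fin by (intro sets.finite_UN) auto
  thus ?thesis using sub m by blast
qed

lemma uniform_slice:
  fixes a b :: "real \<Rightarrow> real" and L s :: real
  assumes L: "L > 0" and fin: "finite V" and s: "s \<ge> 0" and card: "card V \<le> \<kappa>"
    and inV: "\<forall>z\<in>{0..L}. a z \<in> V \<and> b z \<in> V"
    and mono: "\<forall>z\<in>{0..L}. \<forall>z'\<in>{0..L}. z' > z + s \<longrightarrow>
                 a z \<le> a z' \<and> a z \<le> b z' \<and> b z \<le> a z' \<and> b z \<le> b z'"
    and P: "\<forall>z\<in>{0..L}. P z \<longrightarrow> a z \<noteq> b z"
  shows "(\<integral>\<^sup>+ z. indicator {z. P z} z \<partial>uniform_measure lborel {0..L}) \<le> ennreal (real \<kappa> * s / L)"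
proof -
  obtain U where U: "U \<in> sets lborel" "{z\<in>{0..L}. a z \<noteq> b z} \<subseteq> U"
    "emeasure lborel U \<le> ennreal (real (card V) * s)"
    using cover_lemma[OF fin s inV mono] by blast
  have "(\<integral>\<^sup>+ z. indicator {z. P z} z \<partial>uniform_measure lborel {0..L})
      \<le> (\<integral>\<^sup>+ z. indicator U z \<partial>uniform_measure lborel {0..L})"
  proof (rule nn_integral_mono_AE)
    show "AE z in uniform_measure lborel {0..L}. indicator {z. P z} z \<le> (indicator U z :: ennreal)"
      by (intro AE_uniform_measureI AE_I2) (use P U(2) in \<open>auto simp: indicator_def\<close>)
  qed
  also have "\<dots> = emeasure lborel ({0..L} \<inter> U) / emeasure lborel {0..L}"
    using U(1) by simp
  also have "\<dots> \<le> emeasure lborel U / ennreal L"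
  proof -
    have "emeasure lborel {0..L} = ennreal L" using L by simp
    moreover have "emeasure lborel ({0..L} \<inter> U) \<le> emeasure lborel U"
      by (rule emeasure_mono[OF Int_lower2 U(1)])
    ultimately show ?thesis using U(1) by (simp add: divide_right_mono_ennreal)
  qed
  also have "\<dots> \<le> ennreal (real (card V) * s) / ennreal L"
    by (intro divide_right_mono_ennreal U(3))
  also have "\<dots> \<le> ennreal (real \<kappa> * s) / ennreal L"
    using card s by (intro divide_right_mono_ennreal ennreal_leI mult_right_mono) auto
  also have "\<dots> = ennreal (real \<kappa> * s / L)"
    using L s by (simp add: divide_ennreal)
  finally show ?thesis .
qed




lemma F_sets:
  fixes sel :: "(nat \<Rightarrow> real) \<Rightarrow> nat \<Rightarrow> 'x" and G :: "'x \<Rightarrow> nat \<Rightarrow> real"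
  assumes m1: "(\<lambda>\<alpha>. sel \<alpha> t) \<in> measurable M (count_space UNIV)"
    and m2: "(\<lambda>\<alpha>. sel \<alpha> (Suc t)) \<in> measurable M (count_space UNIV)"
  shows "{\<alpha> \<in> space M. G (sel \<alpha> t) j \<noteq> G (sel \<alpha> (Suc t)) j} \<in> sets M"
proof -
  have g1: "(\<lambda>\<alpha>. G (sel \<alpha> t) j) \<in> borel_measurable M"
    by (rule measurable_compose[OF m1]) simp
  have g2: "(\<lambda>\<alpha>. G (sel \<alpha> (Suc t)) j) \<in> borel_measurable M"
    by (rule measurable_compose[OF m2]) simp
  have "{\<alpha> \<in> space M. G (sel \<alpha> t) j = G (sel \<alpha> (Suc t)) j} \<in> sets M"
    by (rule measurable_equality_set[OF g1 g2])
  hence "space M - {\<alpha> \<in> space M. G (sel \<alpha> t) j = G (sel \<alpha> (Suc t)) j} \<in> sets M"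
    by auto
  moreover have "{\<alpha> \<in> space M. G (sel \<alpha> t) j \<noteq> G (sel \<alpha> (Suc t)) j} = space M - {\<alpha> \<in> space M. G (sel \<alpha> t) j = G (sel \<alpha> (Suc t)) j}"
    by auto
  ultimately show ?thesis by simp
qed

lemma F_bound:
  fixes sel :: "(nat \<Rightarrow> real) \<Rightarrow> nat \<Rightarrow> 'x"
  assumes L: "L > 0" and adm: "admissible X N G \<kappa> \<delta>"
    and fb: "\<forall>x\<in>X. \<forall>b. f x b \<in> {0..1}" and fin: "finite X"
    and eps: "\<epsilon> \<ge> 0" and dpos: "\<delta> > 0"
    and lead: "\<forall>t<T. \<forall>\<alpha>. (\<forall>j<N. \<alpha> j \<in> {0..L}) \<longrightarrow> ftpl_choice X f y G N \<epsilon> \<alpha> t (sel \<alpha> t)"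
    and meas: "\<forall>t<T. (\<lambda>\<alpha>. sel \<alpha> t) \<in> measurable (PiM {..<N} (\<lambda>_. uniform_measure lborel {0..L})) (count_space UNIV)"
    and t: "Suc t < T" and j: "j < N"
  shows "emeasure (PiM {..<N} (\<lambda>_. uniform_measure lborel {0..L}))
           {\<alpha> \<in> space (PiM {..<N} (\<lambda>_. uniform_measure lborel {0..L})). G (sel \<alpha> t) j \<noteq> G (sel \<alpha> (Suc t)) j}
         \<le> ennreal (real \<kappa> * ((1 + 2 * \<epsilon>) / \<delta>) / L)"
proof -
  define M where "M = (\<lambda>_::nat. uniform_measure lborel {0..L})"
  define s where "s = (1 + 2 * \<epsilon>) / \<delta>"
  define I where "I = {..<N} - {j}"
  define F where "F = {\<alpha> \<in> space (PiM {..<N} M). G (sel \<alpha> t) j \<noteq> G (sel \<alpha> (Suc t)) j}"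
  have Mprob: "prob_space (M i)" for i
    unfolding M_def using L by (intro prob_space_uniform_measure) auto
  interpret product_sigma_finite M
    unfolding product_sigma_finite_def
    using Mprob by (auto intro: prob_space_imp_sigma_finite)
  have ins: "insert j I = {..<N}" using j by (auto simp: I_def)
  have fI: "finite I" "j \<notin> I" by (auto simp: I_def)
  have m1[measurable]: "(\<lambda>\<alpha>. sel \<alpha> t) \<in> measurable (PiM {..<N} M) (count_space UNIV)"
    using meas t unfolding M_def by auto
  have m2[measurable]: "(\<lambda>\<alpha>. sel \<alpha> (Suc t)) \<in> measurable (PiM {..<N} M) (count_space UNIV)"
    using meas t unfolding M_def by auto
  have g1: "(\<lambda>\<alpha>. G (sel \<alpha> t) j) \<in> borel_measurable (PiM {..<N} M)"
    by (rule measurable_compose[OF m1]) simp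
  have g2: "(\<lambda>\<alpha>. G (sel \<alpha> (Suc t)) j) \<in> borel_measurable (PiM {..<N} M)"
    by (rule measurable_compose[OF m2]) simp
  have Fm: "F \<in> sets (PiM {..<N} M)"
  proof -
    have "{\<alpha> \<in> space (PiM {..<N} M). G (sel \<alpha> t) j = G (sel \<alpha> (Suc t)) j} \<in> sets (PiM {..<N} M)"
      by (rule measurable_equality_set[OF g1 g2])
    hence "space (PiM {..<N} M) - {\<alpha> \<in> space (PiM {..<N} M). G (sel \<alpha> t) j = G (sel \<alpha> (Suc t)) j} \<in> sets (PiM {..<N} M)"
      by auto
    moreover have "F = space (PiM {..<N} M) - {\<alpha> \<in> space (PiM {..<N} M). G (sel \<alpha> t) j = G (sel \<alpha> (Suc t)) j}"
      unfolding F_def by auto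
    ultimately show ?thesis by simp
  qed
  have "emeasure (PiM {..<N} M) F = (\<integral>\<^sup>+ \<alpha>. indicator F \<alpha> \<partial>PiM (insert j I) M)"
    using Fm ins by simp
  also have "\<dots> = (\<integral>\<^sup>+ x. (\<integral>\<^sup>+ z. indicator F (x(j := z)) \<partial>(M j)) \<partial>(PiM I M))"
    using fI Fm ins by (intro product_nn_integral_insert) auto
  also have "\<dots> \<le> (\<integral>\<^sup>+ x. ennreal (real \<kappa> * s / L) \<partial>(PiM I M))"
  proof (rule nn_integral_mono_AE)
    have "AE x in PiM I M. \<forall>i\<in>I. x i \<in> {0..L}"
      using fI(1)
    proof (intro eventually_ball_finite ballI)
      fix i assume "i \<in> I"
      show "AE x in PiM I M. x i \<in> {0..L}"
        by (rule AE_PiM_component[OF Mprob \<open>i \<in> I\<close>])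
           (unfold M_def, rule AE_uniform_measureI, auto intro: AE_I2)
    qed
    then show "AE x in PiM I M. (\<integral>\<^sup>+ z. indicator F (x(j := z)) \<partial>(M j)) \<le> ennreal (real \<kappa> * s / L)"
    proof (rule AE_mp, intro AE_I2 impI)
      fix x assume xb: "\<forall>i\<in>I. x i \<in> {0..L}"
      have box: "\<forall>i<N. (x(j := z)) i \<in> {0..L}" if "z \<in> {0..L}" for z
        using xb that by (auto simp: I_def)
      define a where "a = (\<lambda>z. G (sel (x(j := z)) t) j)"
      define b where "b = (\<lambda>z. G (sel (x(j := z)) (Suc t)) j)"
      have ch: "ftpl_choice X f y G N \<epsilon> (x(j := z)) t (sel (x(j := z)) t)"
           "ftpl_choice X f y G N \<epsilon> (x(j := z)) (Suc t) (sel (x(j := z)) (Suc t))"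
        if "z \<in> {0..L}" for z
        using lead box[OF that] t by auto
      have V: "finite ((\<lambda>x. G x j) ` X)" "card ((\<lambda>x. G x j) ` X) \<le> \<kappa>"
        using fin adm j by (auto simp: admissible_def)
      have inV: "\<forall>z\<in>{0..L}. a z \<in> (\<lambda>x. G x j) ` X \<and> b z \<in> (\<lambda>x. G x j) ` X"
        using ch unfolding a_def b_def ftpl_choice_def by auto
      have mono: "\<forall>z\<in>{0..L}. \<forall>z'\<in>{0..L}. z' > z + s \<longrightarrow>
                 a z \<le> a z' \<and> a z \<le> b z' \<and> b z \<le> a z' \<and> b z \<le> b z'"
      proof (intro ballI impI)
        fix z z' assume z: "z \<in> {0..L}" and z': "z' \<in> {0..L}" and gt: "z' > z + s"
        have u: "((x(j := z')) j - (x(j := z)) j) * \<delta> > 1 + 2 * \<epsilon>"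
        proof -
          have "(1 + 2 * \<epsilon>) / \<delta> < z' - z" using gt by (simp add: s_def)
          hence "1 + 2 * \<epsilon> < (z' - z) * \<delta>" using dpos by (simp add: pos_divide_less_eq)
          thus ?thesis by simp
        qed
        have bi: "\<forall>i. i \<noteq> j \<longrightarrow> (x(j := z')) i = (x(j := z)) i" by simp
        note ms = mono_step[OF adm fb _ _ j bi _ dpos eps u]
        show "a z \<le> a z' \<and> a z \<le> b z' \<and> b z \<le> a z' \<and> b z \<le> b z'"
          unfolding a_def b_def
          using ms[OF ch(1)[OF z] ch(1)[OF z']] ms[OF ch(1)[OF z] ch(2)[OF z']]
                ms[OF ch(2)[OF z] ch(1)[OF z']] ms[OF ch(2)[OF z] ch(2)[OF z']]
          by auto
      qed
      have P: "\<forall>z\<in>{0..L}. x(j := z) \<in> F \<longrightarrow> a z \<noteq> b z"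
        unfolding F_def a_def b_def by auto
      have sp: "s \<ge> 0" using eps dpos by (simp add: s_def)
      have "(\<integral>\<^sup>+ z. indicator F (x(j := z)) \<partial>(M j)) = (\<integral>\<^sup>+ z. indicator {z. x(j := z) \<in> F} z \<partial>uniform_measure lborel {0..L})"
        by (simp add: M_def indicator_def)
      also have "\<dots> \<le> ennreal (real \<kappa> * s / L)"
        by (rule uniform_slice[OF L V(1) sp V(2) inV mono P])
      finally show "(\<integral>\<^sup>+ z. indicator F (x(j := z)) \<partial>(M j)) \<le> ennreal (real \<kappa> * s / L)" .
    qed
  qed
  also have "\<dots> = ennreal (real \<kappa> * s / L)"
  proof -
    interpret prob_space "PiM I M" by (rule prob_space_PiM[OF Mprob])
    show ?thesis by (simp add: emeasure_space_1)
  qed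
  finally show ?thesis unfolding F_def M_def s_def .
qed




lemma pointwise:
  fixes sel :: "(nat \<Rightarrow> real) \<Rightarrow> nat \<Rightarrow> 'x" and \<alpha> :: "nat \<Rightarrow> real"
  assumes T: "T = Suc m" and fin: "finite X" and ne: "X \<noteq> {}"
    and fb: "\<forall>x\<in>X. \<forall>b. f x b \<in> {0..1}" and Gb: "\<forall>x\<in>X. \<forall>j<N. G x j \<in> {0..1}"
    and rows: "\<forall>x\<in>X. \<forall>x'\<in>X. x \<noteq> x' \<longrightarrow> (\<exists>j<N. G x j \<noteq> G x' j)"
    and lead: "\<forall>t<T. ftpl_choice X f y G N \<epsilon> \<alpha> t (sel \<alpha> t)"
    and box: "\<forall>i<N. \<alpha> i \<in> {0..L}"
  shows "Max ((\<lambda>x. \<Sum>t<T. f x (y t)) ` X) - (\<Sum>t<T. f (sel \<alpha> t) (y t))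
     \<le> \<epsilon> * real T + (if \<exists>x\<in>X. \<exists>x'\<in>X. x \<noteq> x' then 1 else 0) + real N * L
        + (\<Sum>t<m. \<Sum>j<N. if G (sel \<alpha> t) j \<noteq> G (sel \<alpha> (Suc t)) j then 1 else 0)"
proof -
  define x where "x = sel \<alpha>"
  define \<Phi> where "\<Phi> = (\<lambda>z. \<Sum>i<N. \<alpha> i * G z i)"
  define R where "R = (\<lambda>k z. \<Sum>\<tau><k. f z (y \<tau>))"
  define c where "c = (if \<exists>x\<in>X. \<exists>x'\<in>X. x \<noteq> x' then 1 else (0::real))"
  have xX: "x t \<in> X" if "t < T" for t using lead that by (auto simp: x_def ftpl_choice_def)
  have ld: "R t (x t) + \<Phi> (x t) \<ge> R t z + \<Phi> z - \<epsilon>" if "t < T" "z \<in> X" for t z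
    using lead that by (auto simp: x_def ftpl_choice_def R_def \<Phi>_def)
  have btl: "k \<le> m \<Longrightarrow> (\<Sum>t<k. f (x (Suc t)) (y t)) + \<Phi> (x 0) \<ge> R k (x k) + \<Phi> (x k) - \<epsilon> * k" for k
  proof (induction k)
    case 0 thus ?case by (simp add: R_def)
  next
    case (Suc k)
    have "k < T" "Suc k < T" using Suc.prems T by auto
    have "R k (x k) + \<Phi> (x k) \<ge> R k (x (Suc k)) + \<Phi> (x (Suc k)) - \<epsilon>"
      using ld[OF \<open>k < T\<close> xX[OF \<open>Suc k < T\<close>]] .
    moreover have "R (Suc k) (x (Suc k)) = R k (x (Suc k)) + f (x (Suc k)) (y k)"
      by (simp add: R_def)
    ultimately show ?case using Suc by (simp add: algebra_simps)
  qed
  have Phi0: "\<Phi> (x 0) \<le> real N * L"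
  proof -
    have "\<Phi> (x 0) \<le> (\<Sum>i<N. L)" unfolding \<Phi>_def
    proof (rule sum_mono)
      fix i assume "i \<in> {..<N}"
      hence "\<alpha> i \<in> {0..L}" "G (x 0) i \<in> {0..1}" using box Gb xX[of 0] T by auto
      thus "\<alpha> i * G (x 0) i \<le> L"
        by (auto intro: mult_le_one order_trans[OF mult_left_mono[of "G (x 0) i" 1 "\<alpha> i"]])
    qed
    thus ?thesis by simp
  qed
  have Phinn: "\<Phi> z \<ge> 0" if "z \<in> X" for z
    unfolding \<Phi>_def using box Gb that by (intro sum_nonneg) auto
  have stab: "(\<Sum>t<m. f (x (Suc t)) (y t) - f (x t) (y t))
      \<le> (\<Sum>t<m. \<Sum>j<N. if G (x t) j \<noteq> G (x (Suc t)) j then 1 else 0)"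
  proof (rule sum_mono)
    fix t assume "t \<in> {..<m}"
    hence tX: "x t \<in> X" "x (Suc t) \<in> X" using xX T by auto
    show "f (x (Suc t)) (y t) - f (x t) (y t) \<le> (\<Sum>j<N. if G (x t) j \<noteq> G (x (Suc t)) j then 1 else 0)"
    proof (cases "x (Suc t) = x t")
      case True thus ?thesis by (simp add: sum_nonneg)
    next
      case False
      then obtain j where j: "j < N" "G (x t) j \<noteq> G (x (Suc t)) j" using rows tX by metis
      have "(1::real) \<le> (\<Sum>j<N. if G (x t) j \<noteq> G (x (Suc t)) j then 1 else 0)"
        using member_le_sum[of j "{..<N}" "\<lambda>j. if G (x t) j \<noteq> G (x (Suc t)) j then (1::real) else 0"] j
        by auto
      moreover have "f (x (Suc t)) (y t) - f (x t) (y t) \<le> 1"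
      proof -
        have "f (x (Suc t)) (y t) \<le> 1" "f (x t) (y t) \<ge> 0" using fb tX by auto
        thus ?thesis by linarith
      qed
      ultimately show ?thesis by linarith
    qed
  qed
  have main: "R T z - (\<Sum>t<T. f (x t) (y t)) \<le> \<epsilon> * real T + c + real N * L
        + (\<Sum>t<m. \<Sum>j<N. if G (x t) j \<noteq> G (x (Suc t)) j then 1 else 0)" if zX: "z \<in> X" for z
  proof -
    have mT: "m < T" using T by simp
    have b: "(\<Sum>t<m. f (x (Suc t)) (y t)) + \<Phi> (x 0) \<ge> R m (x m) + \<Phi> (x m) - \<epsilon> * m"
      using btl by simp
    have l: "R m (x m) + \<Phi> (x m) \<ge> R m z + \<Phi> z - \<epsilon>" using ld[OF mT zX] .
    have RT: "R T z = R m z + f z (y m)" by (simp add: R_def T)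
    have PT: "(\<Sum>t<T. f (x t) (y t)) = (\<Sum>t<m. f (x t) (y t)) + f (x m) (y m)" by (simp add: T)
    have cc: "f z (y m) - f (x m) (y m) \<le> c"
    proof (cases "z = x m")
      case True thus ?thesis by (simp add: c_def)
    next
      case False
      hence "c = 1" using zX xX[OF mT] by (auto simp: c_def)
      moreover have "f z (y m) \<le> 1" "f (x m) (y m) \<ge> 0" using fb zX xX[OF mT] by auto
      ultimately show ?thesis by linarith
    qed
    have sd: "(\<Sum>t<m. f (x (Suc t)) (y t) - f (x t) (y t)) = (\<Sum>t<m. f (x (Suc t)) (y t)) - (\<Sum>t<m. f (x t) (y t))"
      by (simp add: sum_subtractf)
    have "\<epsilon> * real m + \<epsilon> = \<epsilon> * real T" by (simp add: T algebra_simps)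
    thus ?thesis using b l RT PT cc sd stab Phi0 Phinn[OF zX] by linarith
  qed
  have "Max ((\<lambda>x. \<Sum>t<T. f x (y t)) ` X) \<le> \<epsilon> * real T + c + real N * L
        + (\<Sum>t<m. \<Sum>j<N. if G (x t) j \<noteq> G (x (Suc t)) j then 1 else 0) + (\<Sum>t<T. f (x t) (y t))"
    using fin ne main by (auto simp: Max_le_iff R_def algebra_simps)
  thus ?thesis by (simp add: x_def c_def)
qed




theorem theorem2p3:
  "\<exists>C::real. \<forall>(X::'x set) (f::'x \<Rightarrow> 'y \<Rightarrow> real) (y::nat \<Rightarrow> 'y)
      (G::'x \<Rightarrow> nat \<Rightarrow> real) (N::nat) (\<kappa>::nat) (\<delta>::real) (\<epsilon>::real) (T::nat)
      (sel::(nat \<Rightarrow> real) \<Rightarrow> nat \<Rightarrow> 'x).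
     let \<eta> = sqrt (\<delta> / ((1 + 2 * \<epsilon>) * real T * real \<kappa>)) in
     (finite X \<and> X \<noteq> {} \<and>
      (\<forall>x\<in>X. \<forall>b. f x b \<in> {0..1}) \<and>
      (\<forall>x\<in>X. \<forall>j<N. G x j \<in> {0..1}) \<and>
      \<kappa> \<ge> 1 \<and> \<delta> > 0 \<and> admissible X N G \<kappa> \<delta> \<and>
      \<epsilon> \<ge> 0 \<and> T \<ge> 1 \<and>
      (\<forall>t<T. \<forall>\<alpha>. (\<forall>j<N. \<alpha> j \<in> {0..1/\<eta>}) \<longrightarrow>
          ftpl_choice X f y G N \<epsilon> \<alpha> t (sel \<alpha> t)) \<and>
      (\<forall>t<T. (\<lambda>\<alpha>. sel \<alpha> t) \<in> measurable (ftpl_noise N \<eta>) (count_space UNIV)))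
     \<longrightarrow> regret X f y T (ftpl_noise N \<eta>) sel
           \<le> C * real N * sqrt ((1 + 2 * \<epsilon>) * real T * real \<kappa> / \<delta>) + \<epsilon> * real T"
proof (rule exI[of _ 3], intro allI, unfold Let_def, intro impI, elim conjE)
  fix X :: "'x set" and f :: "'x \<Rightarrow> 'y \<Rightarrow> real" and y :: "nat \<Rightarrow> 'y"
    and G :: "'x \<Rightarrow> nat \<Rightarrow> real" and N :: nat and \<kappa> :: nat and \<delta> \<epsilon> :: real and T :: nat
    and sel :: "(nat \<Rightarrow> real) \<Rightarrow> nat \<Rightarrow> 'x"
  define \<eta> where "\<eta> = sqrt (\<delta> / ((1 + 2 * \<epsilon>) * real T * real \<kappa>))"
  define Q where "Q = (1 + 2 * \<epsilon>) * real T * real \<kappa> / \<delta>"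
  define L where "L = 1 / \<eta>"
  assume fin: "finite X" and ne: "X \<noteq> {}" and fb: "\<forall>x\<in>X. \<forall>b. f x b \<in> {0..1}"
    and Gb: "\<forall>x\<in>X. \<forall>j<N. G x j \<in> {0..1}" and k1: "1 \<le> \<kappa>" and dpos: "0 < \<delta>"
    and adm: "admissible X N G \<kappa> \<delta>" and eps: "0 \<le> \<epsilon>" and T1: "1 \<le> T"
    and lead0: "\<forall>t<T. \<forall>\<alpha>. (\<forall>j<N. \<alpha> j \<in> {0..1 / sqrt (\<delta> / ((1 + 2 * \<epsilon>) * real T * real \<kappa>))}) \<longrightarrow>
          ftpl_choice X f y G N \<epsilon> \<alpha> t (sel \<alpha> t)"
    and meas0: "\<forall>t<T. (\<lambda>\<alpha>. sel \<alpha> t) \<in> measurable (ftpl_noise N (sqrt (\<delta> / ((1 + 2 * \<epsilon>) * real T * real \<kappa>)))) (count_space UNIV)"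
  have Qpos: "Q > 0" using eps dpos k1 T1 by (simp add: Q_def)
  have LQ: "L = sqrt Q"
    unfolding L_def \<eta>_def Q_def by (simp add: real_sqrt_divide)
  have Lpos: "L > 0" using LQ Qpos by simp
  define D where "D = PiM {..<N} (\<lambda>_. uniform_measure lborel {0..L})"
  have Dn: "ftpl_noise N (sqrt (\<delta> / ((1 + 2 * \<epsilon>) * real T * real \<kappa>))) = D"
    by (simp add: ftpl_noise_def D_def L_def \<eta>_def)
  have lead: "\<forall>t<T. \<forall>\<alpha>. (\<forall>j<N. \<alpha> j \<in> {0..L}) \<longrightarrow> ftpl_choice X f y G N \<epsilon> \<alpha> t (sel \<alpha> t)"
    using lead0 by (simp add: L_def \<eta>_def)
  have meas: "\<forall>t<T. (\<lambda>\<alpha>. sel \<alpha> t) \<in> measurable (PiM {..<N} (\<lambda>_. uniform_measure lborel {0..L})) (count_space UNIV)"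
    using meas0 Dn by (simp add: D_def)
  have Mprob: "prob_space (uniform_measure lborel {0..L})"
    using Lpos by (intro prob_space_uniform_measure) auto
  interpret D: prob_space D unfolding D_def by (rule prob_space_PiM[OF Mprob])
  obtain m where m: "T = Suc m" using T1 by (cases T) auto
  define s where "s = (1 + 2 * \<epsilon>) / \<delta>"
  define c where "c = (if \<exists>x\<in>X. \<exists>x'\<in>X. x \<noteq> x' then 1 else (0::real))"
  define F where "F = (\<lambda>t j. {\<alpha> \<in> space D. G (sel \<alpha> t) j \<noteq> G (sel \<alpha> (Suc t)) j})"
  have Fb: "measure D (F t j) \<le> real \<kappa> * s / L" if "t < m" "j < N" for t j
  proof -
    have "emeasure D (F t j) \<le> ennreal (real \<kappa> * s / L)"
      unfolding D_def F_def s_def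
      by (rule F_bound[OF Lpos adm fb fin eps dpos lead meas]) (use that m in auto)
    moreover have "real \<kappa> * s / L \<ge> 0" using Lpos eps dpos by (simp add: s_def)
    ultimately show ?thesis by (simp add: D.emeasure_eq_measure)
  qed
  have Fs: "F t j \<in> sets D" if "t < m" "j < N" for t j
    unfolding F_def D_def by (rule F_sets) (use meas that m in auto)
  define g where "g = (\<lambda>\<alpha>. \<epsilon> * real T + c + real N * L + (\<Sum>t<m. \<Sum>j<N. indicator (F t j) \<alpha>))"
  define h where "h = (\<lambda>\<alpha>. (\<Sum>t<m. \<Sum>j<N. indicator (F t j) \<alpha> :: real))"
  have indint: "integrable D (indicator (F t j) :: _ \<Rightarrow> real)" if "t < m" "j < N" for t j
    using Fs[OF that] by (intro integrable_real_indicator) (auto simp: D.emeasure_eq_measure)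
  have hint: "integrable D h" unfolding h_def by (auto intro!: integrable_sum indint)
  have geq: "g = (\<lambda>\<alpha>. (\<epsilon> * real T + c + real N * L) + h \<alpha>)" by (simp add: g_def h_def fun_eq_iff)
  have gint: "integrable D g" unfolding geq using hint by (intro Bochner_Integration.integrable_add) auto
  have hval: "integral\<^sup>L D h = (\<Sum>t<m. \<Sum>j<N. measure D (F t j))"
  proof -
    have "integral\<^sup>L D h = (\<Sum>t<m. integral\<^sup>L D (\<lambda>\<alpha>. \<Sum>j<N. indicator (F t j) \<alpha> :: real))"
      unfolding h_def by (rule Bochner_Integration.integral_sum) (auto intro!: integrable_sum indint)
    also have "\<dots> = (\<Sum>t<m. \<Sum>j<N. integral\<^sup>L D (indicator (F t j) :: _ \<Rightarrow> real))"
      by (intro sum.cong refl Bochner_Integration.integral_sum; auto intro!: indint)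
    also have "\<dots> = (\<Sum>t<m. \<Sum>j<N. measure D (F t j))"
      by (intro sum.cong refl) (simp add: F_def Int_absorb2)
    finally show ?thesis .
  qed
  have gval: "integral\<^sup>L D g = \<epsilon> * real T + c + real N * L + (\<Sum>t<m. \<Sum>j<N. measure D (F t j))"
    unfolding geq using hint hval by (simp add: D.prob_space)
  have AEbox: "AE \<alpha> in D. \<forall>i\<in>{..<N}. \<alpha> i \<in> {0..L}"
  proof (intro eventually_ball_finite ballI)
    fix i assume "i \<in> {..<N}"
    show "AE x in D. x i \<in> {0..L}" unfolding D_def
      by (rule AE_PiM_component[OF Mprob \<open>i \<in> {..<N}\<close>])
         (rule AE_uniform_measureI, auto intro: AE_I2)
  qed simp
  have rows: "\<forall>x\<in>X. \<forall>x'\<in>X. x \<noteq> x' \<longrightarrow> (\<exists>j<N. G x j \<noteq> G x' j)"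
    using adm by (simp add: admissible_def)
  have AEb: "AE \<alpha> in D. (Max ((\<lambda>x. \<Sum>t<T. f x (y t)) ` X) - (\<Sum>t<T. f (sel \<alpha> t) (y t))) \<le> g \<alpha>"
    using AEbox AE_space
  proof (eventually_elim)
    case (elim \<alpha>)
    have box: "\<forall>i<N. \<alpha> i \<in> {0..L}" using elim by auto
    have ld: "\<forall>t<T. ftpl_choice X f y G N \<epsilon> \<alpha> t (sel \<alpha> t)" using lead box by auto
    have eq: "(\<Sum>t<m. \<Sum>j<N. if G (sel \<alpha> t) j \<noteq> G (sel \<alpha> (Suc t)) j then 1 else 0)
        = (\<Sum>t<m. \<Sum>j<N. indicator (F t j) \<alpha> :: real)"
      using elim by (intro sum.cong refl) (auto simp: F_def indicator_def)
    show ?case using pointwise[where sel=sel and \<alpha>=\<alpha> and L=L and y=y and f=f and G=G, OF m fin ne fb Gb rows ld box] eq by (simp add: g_def c_def)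
  qed
  have sumb: "(\<Sum>t<m. \<Sum>j<N. measure D (F t j)) \<le> real m * (real N * (real \<kappa> * s / L))"
  proof -
    have "(\<Sum>t<m. \<Sum>j<N. measure D (F t j)) \<le> (\<Sum>t<m. \<Sum>j<N. real \<kappa> * s / L)"
      using Fb by (intro sum_mono) auto
    thus ?thesis by simp
  qed
  have LL: "L * L = Q" using LQ Qpos by simp
  have key: "real T * real \<kappa> * s / L = L"
    using LL Lpos dpos by (simp add: s_def Q_def field_simps)
  have mT: "real m * (real N * (real \<kappa> * s / L)) \<le> real N * L"
  proof -
    have "real m * (real N * (real \<kappa> * s / L)) \<le> real T * (real N * (real \<kappa> * s / L))"
      using m eps dpos Lpos by (intro mult_right_mono) (auto simp: s_def)
    also have "\<dots> = real N * (real T * real \<kappa> * s / L)" by (simp add: field_simps)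
    finally show ?thesis using key by simp
  qed
  have cb: "c \<le> real N * L"
  proof (cases "\<exists>x\<in>X. \<exists>x'\<in>X. x \<noteq> x'")
    case False thus ?thesis using Lpos by (simp add: c_def)
  next
    case True
    then obtain x x' where xx: "x \<in> X" "x' \<in> X" "x \<noteq> x'" by auto
    then obtain j where j: "j < N" "G x j \<noteq> G x' j" using rows by metis
    have "\<bar>G x j - G x' j\<bar> \<ge> \<delta>" using adm xx j unfolding admissible_def by blast
    moreover have "G x j \<in> {0..1}" "G x' j \<in> {0..1}" using Gb xx j by auto
    ultimately have d1: "\<delta> \<le> 1" by auto
    have "Q \<ge> 1"
    proof -
      have "(1 + 2 * \<epsilon>) * real T * real \<kappa> \<ge> 1"
      proof -
        have a: "1 \<le> 1 + 2 * \<epsilon>" "1 \<le> real T" "1 \<le> real \<kappa>" using eps T1 k1 by auto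
        have "(1::real) * 1 * 1 \<le> (1 + 2 * \<epsilon>) * real T * real \<kappa>"
          using a by (intro mult_mono) auto
        thus ?thesis by simp
      qed
      thus ?thesis using d1 dpos by (simp add: Q_def le_divide_eq)
    qed
    hence "L \<ge> 1" using LQ by simp
    moreover have "real N \<ge> 1" using j by simp
    ultimately have "real N * L \<ge> 1" by (metis mult_mono' mult_1 zero_le_one)
    thus ?thesis using True by (simp add: c_def)
  qed
  have bound: "integral\<^sup>L D g \<le> 3 * real N * sqrt Q + \<epsilon> * real T"
  proof -
    have "3 * real N * sqrt Q = 3 * (real N * L)" using LQ by simp
    thus ?thesis using gval sumb mT cb by linarith
  qed
  have "regret X f y T D sel \<le> 3 * real N * sqrt Q + \<epsilon> * real T"
  proof (cases "integrable D (\<lambda>\<alpha>. Max ((\<lambda>x. \<Sum>t<T. f x (y t)) ` X) - (\<Sum>t<T. f (sel \<alpha> t) (y t)))")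
    case True
    have "regret X f y T D sel \<le> integral\<^sup>L D g"
      unfolding regret_def by (rule integral_mono_AE[OF True gint AEb])
    thus ?thesis using bound by linarith
  next
    case False
    hence "regret X f y T D sel = 0" unfolding regret_def by (rule not_integrable_integral_eq)
    moreover have "0 \<le> 3 * real N * sqrt Q + \<epsilon> * real T"
      by (intro add_nonneg_nonneg mult_nonneg_nonneg) (use eps Qpos in auto)
    ultimately show ?thesis by simp
  qed
  thus "regret X f y T (ftpl_noise N (sqrt (\<delta> / ((1 + 2 * \<epsilon>) * real T * real \<kappa>)))) sel
           \<le> 3 * real N * sqrt ((1 + 2 * \<epsilon>) * real T * real \<kappa> / \<delta>) + \<epsilon> * real T"
    using Dn by (simp add: Q_def)
qed


end
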